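(* For every $i \in \mathbb{N}$, the transposition $\sigma_{(i)}$ lies in the bi-immune symmetric group $G_{\mathfrak{B}}$.
   Context: $\mathbb{N}$ denotes the non-negative integers, and $\mathrm{Sym}(\mathbb{N})$ the group of all permutations of $\mathbb{N}$ under composition ($g \circ f$ means apply $f$ first). For $i \in \mathbb{N}$, $\sigma_{(i)}$ is the permutation swapping $i$ and $i+1$ and fixing all other numbers. For $A \subseteq \mathbb{N}$ with increasing enumeration $a_0 < a_1 < \cdots$, define $\sigma_A(x) = \lim_{n \to \infty} (\sigma_{(a_0)} \circ \sigma_{(a_1)} \circ \cdots \circ \sigma_{(a_n)})(x)$ (eventually constant for each $x$). A set $A$ is immune if it is infinite and contains no infinite computably enumerable subset; $A$ is bi-immune if both $A$ and $\mathbb{N} - A$ are immune. For bi-immune $A$, $\sigma_A$ is a permutation of $\mathbb{N}$. The bi-immune symmetric group $G_{\mathfrak{B}}$ is the subgroup of $\mathrm{Sym}(\mathbb{N})$ generated by $\{\sigma_A : A \text{ bi-immune}\}$. *)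

theory Defs
  imports Main "HOL-Library.Infinite_Set" "HOL-Algebra.Bij" "HOL-Algebra.Generated_Groups"
begin

datatype recf = Zf | Sf | Idf nat | Cnf recf "recf list" | Prf recf recf | Mnf recf

text \<open>Big-step semantics: eval f xs y means f applied to the argument list xs
  converges with value y.\<close>
inductive eval :: "recf \<Rightarrow> nat list \<Rightarrow> nat \<Rightarrow> bool" where
  ev_Z: "eval Zf xs 0"
| ev_S: "eval Sf (x # xs) (Suc x)"
| ev_Id: "k < length xs \<Longrightarrow> eval (Idf k) xs (xs ! k)"
| ev_Cn: "length ys = length gs \<Longrightarrow> (\<forall>i < length gs. eval (gs ! i) xs (ys ! i))
           \<Longrightarrow> eval f ys z \<Longrightarrow> eval (Cnf f gs) xs z"
| ev_Pr0: "eval f xs z \<Longrightarrow> eval (Prf f g) (0 # xs) z"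
| ev_PrS: "eval (Prf f g) (n # xs) y \<Longrightarrow> eval g (n # y # xs) z
           \<Longrightarrow> eval (Prf f g) (Suc n # xs) z"
| ev_Mn: "eval f (n # xs) 0 \<Longrightarrow> (\<forall>m < n. \<exists>y. eval f (m # xs) (Suc y))
           \<Longrightarrow> eval (Mnf f) xs n"

definition ce :: "nat set \<Rightarrow> bool" where
  "ce A \<longleftrightarrow> (\<exists>f. A = {x. \<exists>y. eval f [x] y})"

definition immune :: "nat set \<Rightarrow> bool" where
  "immune A \<longleftrightarrow> infinite A \<and> \<not> (\<exists>B. B \<subseteq> A \<and> infinite B \<and> ce B)"

definition bi_immune :: "nat set \<Rightarrow> bool" where
  "bi_immune A \<longleftrightarrow> immune A \<and> immune (UNIV - A)"

definition adj_swap :: "nat \<Rightarrow> nat \<Rightarrow> nat" where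
  "adj_swap i = (\<lambda>x. if x = i then Suc i else if x = Suc i then i else x)"

fun prefix_comp :: "nat set \<Rightarrow> nat \<Rightarrow> nat \<Rightarrow> nat" where
  "prefix_comp A 0 = adj_swap (enumerate A 0)"
| "prefix_comp A (Suc n) = prefix_comp A n \<circ> adj_swap (enumerate A (Suc n))"

definition sigma_set :: "nat set \<Rightarrow> nat \<Rightarrow> nat" where
  "sigma_set A = (\<lambda>x. THE y. \<exists>N. \<forall>n \<ge> N. prefix_comp A n x = y)"

definition G_B :: "(nat \<Rightarrow> nat) set" where
  "G_B = generate (BijGroup (UNIV :: nat set)) {sigma_set A | A. bi_immune A}"

end

theory Submission
  imports Defs "HOL-Library.Countable"
begin

instance recf :: countable by countable_datatype

definition sparse :: "nat set \<Rightarrow> bool" where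
  "sparse A \<longleftrightarrow> (\<forall>x\<in>A. Suc x \<notin> A)"

definition tau :: "nat set \<Rightarrow> nat \<Rightarrow> nat" where
  "tau A x = (if x \<in> A then Suc x else if x \<noteq> 0 \<and> x - 1 \<in> A then x - 1 else x)"

lemma prefix_formula:
  assumes inf: "infinite A" and sp: "sparse A"
  shows "prefix_comp A n x = (if \<exists>k\<le>n. x = enumerate A k then Suc x
      else if \<exists>k\<le>n. x = Suc (enumerate A k) then x - 1 else x)"
proof (induction n arbitrary: x)
  case 0
  then show ?case by (auto simp: adj_swap_def)
next
  case (Suc n)
  define e where "e = enumerate A (Suc n)"
  have eA: "e \<in> A" using e_def enumerate_in_set inf by blast
  have lt: "\<And>k. k \<le> n \<Longrightarrow> enumerate A k < e" using e_def enumerate_mono inf by simp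
  have nS: "\<And>k. k \<le> n \<Longrightarrow> e \<noteq> Suc (enumerate A k)"
    using sp eA enumerate_in_set[OF inf] unfolding sparse_def by metis
  have "prefix_comp A (Suc n) x = prefix_comp A n (adj_swap e x)" by (simp add: e_def)
  also have "\<dots> = (if \<exists>k\<le>Suc n. x = enumerate A k then Suc x
      else if \<exists>k\<le>Suc n. x = Suc (enumerate A k) then x - 1 else x)"
  proof (cases "x = e \<or> x = Suc e")
    case True
    then show ?thesis
    proof
      assume xe: "x = e"
      have "adj_swap e x = Suc e" by (simp add: adj_swap_def xe)
      moreover have "\<not> (\<exists>k\<le>n. Suc e = enumerate A k)" using lt by (metis Suc_lessD less_not_refl)
      moreover have "\<not> (\<exists>k\<le>n. Suc e = Suc (enumerate A k))" using lt by (metis less_not_refl nat.inject)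
      ultimately show ?thesis unfolding Suc.IH using xe e_def by auto
    next
      assume xe: "x = Suc e"
      have "adj_swap e x = e" by (simp add: adj_swap_def xe)
      moreover have "\<not> (\<exists>k\<le>n. e = enumerate A k)" using lt by (metis less_not_refl)
      moreover have "\<not> (\<exists>k\<le>n. e = Suc (enumerate A k))" using nS by metis
      moreover have "\<not> (\<exists>k\<le>Suc n. Suc e = enumerate A k)"
        using lt e_def by (metis Suc_lessD le_Suc_eq less_not_refl n_not_Suc_n)
      ultimately show ?thesis unfolding Suc.IH using xe e_def by auto
    qed
  next
    case False
    then have "adj_swap e x = x" by (auto simp: adj_swap_def)
    then show ?thesis unfolding Suc.IH using False e_def by (auto simp: le_Suc_eq)
  qed
  finally show ?case .
qed

lemma prefix_eventually:
  assumes inf: "infinite A" and sp: "sparse A" and n: "x \<le> n"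
  shows "prefix_comp A n x = tau A x"
proof -
  have le: "\<And>k. k \<le> enumerate A k" using le_enumerate inf by blast
  have e1: "(\<exists>k\<le>n. x = enumerate A k) \<longleftrightarrow> x \<in> A"
    using enumerate_in_set[OF inf] enumerate_Ex[OF inf] le n by (metis le_trans)
  have e2: "(\<exists>k\<le>n. x = Suc (enumerate A k)) \<longleftrightarrow> x \<noteq> 0 \<and> x - 1 \<in> A"
  proof
    assume "\<exists>k\<le>n. x = Suc (enumerate A k)" then show "x \<noteq> 0 \<and> x - 1 \<in> A"
      using enumerate_in_set[OF inf] by auto
  next
    assume h: "x \<noteq> 0 \<and> x - 1 \<in> A"
    then obtain k where "enumerate A k = x - 1" using enumerate_Ex[OF inf] by blast
    moreover have "k \<le> n" using le[of k] calculation h n by linarith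
    ultimately show "\<exists>k\<le>n. x = Suc (enumerate A k)" using h by (metis Suc_pred' gr0I)
  qed
  show ?thesis unfolding prefix_formula[OF inf sp] e1 e2 tau_def by simp
qed

lemma sigma_tau:
  assumes inf: "infinite A" and sp: "sparse A"
  shows "sigma_set A = tau A"
proof
  fix x
  show "sigma_set A x = tau A x"
    unfolding sigma_set_def
  proof (rule the_equality)
    show "\<exists>N. \<forall>n\<ge>N. prefix_comp A n x = tau A x"
      using prefix_eventually[OF inf sp] by blast
  next
    fix y assume "\<exists>N. \<forall>n\<ge>N. prefix_comp A n x = y"
    then obtain N where "\<forall>n\<ge>N. prefix_comp A n x = y" by blast
    then have "prefix_comp A (max N x) x = y" by simp
    moreover have "prefix_comp A (max N x) x = tau A x"
      using prefix_eventually[OF inf sp] by simp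
    ultimately show "y = tau A x" by simp
  qed
qed

lemma tau_invol:
  assumes sp: "sparse A"
  shows "tau A (tau A x) = x"
  using sp unfolding sparse_def tau_def
  by (cases x) auto

lemma tau_bij: "sparse A \<Longrightarrow> bij (tau A)"
  by (metis tau_invol bij_betw_byWitness UNIV_I subsetI)

lemma tau_insert:
  assumes "\<forall>a\<in>A. Suc (Suc i) \<le> a"
  shows "tau (insert i A) = adj_swap i \<circ> tau A"
proof
  fix x show "tau (insert i A) x = (adj_swap i \<circ> tau A) x"
    using assms unfolding tau_def adj_swap_def o_def
    by (cases "x = i"; cases "x = Suc i"; cases "x \<in> A"; cases "x \<noteq> 0 \<and> x - 1 \<in> A") force+
qed

definition Dn :: "nat \<Rightarrow> nat set" where
  "Dn n = {x. \<exists>y. eval (from_nat n) [x] y}"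

definition En :: "nat \<Rightarrow> nat set" where
  "En n = (if infinite (Dn n) then Dn n else UNIV)"

definition nxt :: "nat set \<Rightarrow> nat \<Rightarrow> nat" where
  "nxt E m = (LEAST x. x \<in> E \<and> m \<le> x)"

lemma En_inf: "infinite (En n)"
  by (simp add: En_def)

lemma nxt_prop: "infinite E \<Longrightarrow> nxt E m \<in> E \<and> m \<le> nxt E m"
  unfolding nxt_def
  by (rule LeastI_ex) (meson infinite_nat_iff_unbounded_le)

lemma ce_Dn: "ce B \<Longrightarrow> \<exists>n. B = Dn n"
  unfolding ce_def Dn_def by (metis from_nat_to_nat)

fun bnd :: "nat \<Rightarrow> nat \<Rightarrow> nat" where
  "bnd i 0 = Suc (Suc i)"
| "bnd i (Suc n) = Suc (nxt (En n) (Suc (nxt (En n) (bnd i n))))"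

definition aa :: "nat \<Rightarrow> nat \<Rightarrow> nat" where
  "aa i n = nxt (En n) (bnd i n)"

definition bb :: "nat \<Rightarrow> nat \<Rightarrow> nat" where
  "bb i n = nxt (En n) (Suc (aa i n))"

lemma aa_props: "aa i n \<in> En n" "bnd i n \<le> aa i n"
  using nxt_prop[OF En_inf] unfolding aa_def by auto

lemma bnd_Suc: "bnd i (Suc n) = Suc (bb i n)"
  by (simp add: aa_def bb_def)

declare bnd.simps(2) [simp del]

lemma bb_props: "bb i n \<in> En n" "aa i n < bb i n" "bb i n < bnd i (Suc n)"
proof -
  show "bb i n \<in> En n" using nxt_prop[OF En_inf] unfolding bb_def by blast
  show "aa i n < bb i n" using nxt_prop[OF En_inf, of n "Suc (aa i n)"] unfolding bb_def by simp
  show "bb i n < bnd i (Suc n)" by (simp add: bnd_Suc)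
qed

lemma bnd_step: "bnd i n < bnd i (Suc n)"
  using aa_props(2) bb_props(2,3) by (meson le_less_trans less_trans)

lemma bnd_mono: "n < k \<Longrightarrow> bnd i n < bnd i k"
proof (induction k)
  case 0 then show ?case by simp
next
  case (Suc k) then show ?case using bnd_step[of i k] by (metis less_Suc_eq less_trans)
qed

lemma bnd_mono_le: "n \<le> k \<Longrightarrow> bnd i n \<le> bnd i k"
  using bnd_mono by (metis le_less order.strict_implies_order)

lemma bnd_ge: "Suc (Suc i) \<le> bnd i n"
  using bnd_mono_le[of 0 n i] by simp

lemma interval_unique:
  assumes "bnd i n \<le> x" "x < bnd i (Suc n)" "bnd i k \<le> x" "x < bnd i (Suc k)"
  shows "n = k"
proof (rule ccontr)
  assume "n \<noteq> k"
  then have "Suc n \<le> k \<or> Suc k \<le> n" by linarith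
  then show False using bnd_mono_le assms by (meson le_trans not_le)
qed

lemma aa_int: "bnd i n \<le> aa i n" "aa i n < bnd i (Suc n)"
  using aa_props(2)[of i n] bb_props(2,3)[of i n] by linarith+

lemma bb_int: "bnd i n \<le> bb i n" "bb i n < bnd i (Suc n)"
  using aa_props(2)[of i n] bb_props(2,3)[of i n] by linarith+

lemma bb_notin: "bb i n \<noteq> aa i k"
proof
  assume h: "bb i n = aa i k"
  then have "n = k" using interval_unique bb_int aa_int by metis
  then show False using h bb_props(2)[of i k] by simp
qed

lemma aa_gap: "n < k \<Longrightarrow> Suc (aa i n) < aa i k"
proof -
  assume "n < k"
  then have "bnd i (Suc n) \<le> bnd i k" using bnd_mono_le by simp
  then show ?thesis using aa_int[of i n] aa_int[of i k] bb_props(2,3)[of i n] by linarith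
qed

lemma aa_inj: "inj (aa i)"
  by (metis aa_gap inj_onI linorder_neqE_nat Suc_lessD less_not_refl2 not_less_iff_gr_or_eq)

lemma bb_inj: "inj (bb i)"
proof (rule inj_onI)
  fix n k assume "bb i n = bb i k"
  then show "n = k" using interval_unique bb_int by metis
qed

definition AA :: "nat \<Rightarrow> nat set" where "AA i = range (aa i)"

lemma AA_ge: "\<forall>a\<in>AA i. Suc (Suc i) \<le> a"
  unfolding AA_def using aa_int(1) bnd_ge le_trans by blast

lemma AA_inf: "infinite (AA i)"
  unfolding AA_def using aa_inj range_inj_infinite by blast

lemma AA_sparse: "sparse (AA i)"
  unfolding sparse_def AA_def
proof (clarify)
  fix n k assume h: "Suc (aa i n) = aa i k"
  show False
  proof (cases "n < k")
    case True then show False using aa_gap[OF True, of i] h by simp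
  next
    case False then have "aa i k \<le> aa i n"
      using aa_gap by (metis le_less nat_neq_iff Suc_lessD order.strict_implies_order)
    then show False using h by simp
  qed
qed

lemma AA_ins_sparse: "sparse (insert i (AA i))"
  using AA_sparse AA_ge unfolding sparse_def
  by (metis Suc_n_not_le_n insert_iff le_Suc_eq)

lemma bb_ne: "bb i n \<noteq> i"
  using bb_int(1)[of i n] bnd_ge[of i n] by linarith

lemma bb_notA: "bb i n \<notin> insert i (AA i)"
  using bb_ne bb_notin unfolding AA_def by auto

lemma En_eq: "infinite (Dn n) \<Longrightarrow> En n = Dn n"
  by (simp add: En_def)

lemma bi_immune_AA:
  assumes "AA i \<subseteq> A'" "A' \<subseteq> insert i (AA i)"
  shows "bi_immune A'"
  unfolding bi_immune_def immune_def
proof (intro conjI)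
  show "infinite A'" using AA_inf assms(1) finite_subset by blast
  show "infinite (UNIV - A')"
  proof
    assume "finite (UNIV - A')"
    moreover have "range (bb i) \<subseteq> UNIV - A'" using bb_notA assms(2) by blast
    ultimately show False using range_inj_infinite[OF bb_inj] finite_subset by blast
  qed
next
  show "\<not> (\<exists>B\<subseteq>A'. infinite B \<and> ce B)"
  proof
  assume "\<exists>B\<subseteq>A'. infinite B \<and> ce B"
  then obtain B n where B: "B \<subseteq> A'" "infinite B" "B = Dn n" using ce_Dn by blast
  then have "bb i n \<in> B" using bb_props(1)[of i n] En_eq by simp
  then show False using B bb_notA assms(2) by blast
  qed
next
  show "\<not> (\<exists>B\<subseteq>UNIV - A'. infinite B \<and> ce B)"
  proof
  assume "\<exists>B\<subseteq>UNIV - A'. infinite B \<and> ce B"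
  then obtain B n where B: "B \<subseteq> UNIV - A'" "infinite B" "B = Dn n" using ce_Dn by blast
  then have "aa i n \<in> B" using aa_props(1)[of i n] En_eq by simp
  then show False using B assms(1) unfolding AA_def by blast
  qed
qed

lemma sig_carrier: "sparse A \<Longrightarrow> tau A \<in> carrier (BijGroup UNIV)"
  by (simp add: BijGroup_def Bij_def tau_bij)

lemma adj_carrier: "adj_swap i \<in> carrier (BijGroup UNIV)"
proof -
  have "adj_swap i (adj_swap i x) = x" for x by (simp add: adj_swap_def)
  then have "bij (adj_swap i)" by (metis bij_betw_byWitness UNIV_I subsetI)
  then show ?thesis by (simp add: BijGroup_def Bij_def)
qed

theorem mainTheorem4:
  fixes i :: nat
  shows "adj_swap i \<in> G_B"
proof -
  let ?G = "BijGroup (UNIV :: nat set)"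
  let ?A = "AA i" and ?A' = "insert i (AA i)"
  have grp: "group ?G" by (rule group_BijGroup)
  have s1: "sigma_set ?A = tau ?A" using sigma_tau AA_inf AA_sparse by blast
  have s2: "sigma_set ?A' = tau ?A'" using sigma_tau AA_inf AA_ins_sparse by auto
  have c1: "tau ?A \<in> carrier ?G" using sig_carrier AA_sparse by blast
  have c2: "tau ?A' \<in> carrier ?G" using sig_carrier AA_ins_sparse by blast
  have c0: "adj_swap i \<in> carrier ?G" by (rule adj_carrier)
  have m: "tau ?A' = adj_swap i \<otimes>\<^bsub>?G\<^esub> tau ?A"
    using c0 c1 tau_insert[OF AA_ge] by (simp add: BijGroup_def compose_def restrict_def o_def)
  have eq: "adj_swap i = tau ?A' \<otimes>\<^bsub>?G\<^esub> inv\<^bsub>?G\<^esub> tau ?A"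
    unfolding m using c0 c1 grp by (simp add: monoid.m_assoc group.r_inv monoid.r_one group.is_monoid group.inv_closed)
  have in1: "tau ?A' \<in> {sigma_set A | A. bi_immune A}"
    using s2 bi_immune_AA[of i ?A'] by (metis (mono_tags, lifting) mem_Collect_eq order_refl subset_insertI)
  have in2: "tau ?A \<in> {sigma_set A | A. bi_immune A}"
    using s1 bi_immune_AA[of i ?A] by (metis (mono_tags, lifting) mem_Collect_eq order_refl subset_insertI)
  show ?thesis unfolding G_B_def eq
    by (rule generate.eng[OF generate.incl[OF in1] generate.inv[OF in2]])
qed

end
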